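(* Let $a$ be a prime, $s\ge1$, $k_1,\dots,k_s\ge0$ integers with $k_{\max}=\max_xk_x>0$, and $F=F_{a^{k_1}}\otimes\cdots\otimes F_{a^{k_s}}$ of size $N=a^{k_1+\cdots+k_s}$. Then (a) $\mathbf D(F)$ is divisible by $N/a=a^{-1+\sum_xk_x}$; (b) the dephased defect $\mathbf d(F)=\mathbf D(F)-(2N-1)$ is divisible by $(a-1)^2$.
   Context: For $n\ge1$, $F_n$ is the $n\times n$ matrix with rows and columns indexed by $\mathbb Z_n$ and entries $e^{2\pi i\,\tilde i\tilde j/n}$; $\otimes$ is the Kronecker product. For an $N\times N$ rescaled unitary matrix $V$ with no zero entries, the undephased defect is $\mathbf D(V)=\dim_{\mathbb R}\{iR\circ V:\ R\text{ real},\ (iR\circ V)V^*\text{ antihermitian}\}$ ($\circ$ entrywise product); for a Fourier matrix it equals the number of its entries equal to $1$. *)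

theory Defs
  imports "HOL-Analysis.Analysis" "HOL-Library.Function_Algebras"
begin

text \<open>Square complex matrices of size N are represented as functions
  nat \<Rightarrow> nat \<Rightarrow> complex; only entries with indices below N are meaningful.\<close>

type_synonym cmat = "nat \<Rightarrow> nat \<Rightarrow> complex"

definition fourier :: "nat \<Rightarrow> cmat" where
  "fourier n = (\<lambda>i j. exp (2 * pi * \<i> * of_nat (i * j) / of_nat n))"

definition kron :: "cmat \<Rightarrow> nat \<Rightarrow> cmat \<Rightarrow> cmat" where
  "kron A n B = (\<lambda>i j. A (i div n) (j div n) * B (i mod n) (j mod n))"

fun fourier_tensor :: "nat list \<Rightarrow> cmat" where
  "fourier_tensor [] = (\<lambda>i j. 1)"
| "fourier_tensor (n # ns) = kron (fourier n) (prod_list ns) (fourier_tensor ns)"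

definition real_scale_mat :: "real \<Rightarrow> cmat \<Rightarrow> cmat" where
  "real_scale_mat r M = (\<lambda>i j. complex_of_real r * M i j)"

definition mat_mult_adj :: "nat \<Rightarrow> cmat \<Rightarrow> cmat \<Rightarrow> cmat" where
  "mat_mult_adj N A V = (\<lambda>i j. \<Sum>k<N. A i k * cnj (V j k))"

definition antihermitian :: "nat \<Rightarrow> cmat \<Rightarrow> bool" where
  "antihermitian N M \<longleftrightarrow> (\<forall>i<N. \<forall>j<N. M i j = - cnj (M j i))"

definition iR_had :: "nat \<Rightarrow> (nat \<Rightarrow> nat \<Rightarrow> real) \<Rightarrow> cmat \<Rightarrow> cmat" where
  "iR_had N R V = (\<lambda>i j. if i < N \<and> j < N then \<i> * complex_of_real (R i j) * V i j else 0)"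

definition undephased_defect :: "nat \<Rightarrow> cmat \<Rightarrow> nat" where
  "undephased_defect N V =
     vector_space.dim real_scale_mat
       {iR_had N R V | R. antihermitian N (mat_mult_adj N (iR_had N R V) V)}"

end

theory Submission
  imports Defs "HOL-Computational_Algebra.Primes"
begin


lemma sum_split_mult:
  fixes f :: "nat \<Rightarrow> 'a::comm_monoid_add"
  shows "(\<Sum>k<n*P. f k) = (\<Sum>m<n. \<Sum>r<P. f (m*P + r))"
proof -
  have "(\<Sum>k<n*P. f k) = (\<Sum>m<n. sum f {m*P..<m*P+P})"
    by (rule sum.nat_group[symmetric])
  also have "\<dots> = (\<Sum>m<n. \<Sum>r<P. f (m*P + r))"
  proof (rule sum.cong[OF refl])
    fix m
    show "sum f {m*P..<m*P+P} = (\<Sum>r<P. f (m*P + r))"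
    proof -
      have "sum f {m*P..<m*P+P} = sum f {0+m*P..<P+m*P}" by (simp add: add.commute)
      also have "\<dots> = (\<Sum>r\<in>{0..<P}. f (r + m*P))" by (rule sum.shift_bounds_nat_ivl)
      finally show ?thesis by (simp add: atLeast0LessThan add.commute)
    qed
  qed
  finally show ?thesis .
qed

lemma sum_split_mult_divmod:
  fixes g :: "nat \<Rightarrow> nat \<Rightarrow> 'a::comm_monoid_add"
  assumes "P > 0"
  shows "(\<Sum>k<n*P. g (k div P) (k mod P)) = (\<Sum>m<n. \<Sum>r<P. g m r)"
  unfolding sum_split_mult
  by (rule sum.cong[OF refl], rule sum.cong[OF refl]) (use assms in auto)

definition zeta :: "nat \<Rightarrow> complex" where
  "zeta n = exp (2 * pi * \<i> / of_nat n)"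

lemma fourier_zeta: "fourier n i j = zeta n ^ (i*j)"
proof -
  have "2 * pi * \<i> * of_nat (i * j) / of_nat n = of_nat (i*j) * (2 * pi * \<i> / of_nat n)"
    by simp
  then show ?thesis unfolding fourier_def zeta_def by (simp only: exp_of_nat_mult)
qed

lemma zeta_pow_n: "n > 0 \<Longrightarrow> zeta n ^ n = 1"
proof -
  assume "n > 0"
  have "zeta n ^ n = exp (of_nat n * (2 * pi * \<i> / of_nat n))"
    unfolding zeta_def by (simp only: exp_of_nat_mult)
  also have "of_nat n * (2 * pi * \<i> / of_nat n) = 2 * of_real pi * \<i>" using \<open>n>0\<close> by simp
  finally show ?thesis by simp
qed

lemma zeta_pow_mod: "n > 0 \<Longrightarrow> zeta n ^ m = zeta n ^ (m mod n)"
proof -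
  assume "n > 0"
  have "zeta n ^ m = zeta n ^ (n * (m div n) + m mod n)" by simp
  also have "\<dots> = (zeta n ^ n) ^ (m div n) * zeta n ^ (m mod n)"
    by (simp only: power_add power_mult)
  finally show ?thesis using zeta_pow_n[OF \<open>n>0\<close>] by simp
qed

lemma zeta_pow_ne1: assumes "0 < d" "d < n" shows "zeta n ^ d \<noteq> 1"
proof
  assume "zeta n ^ d = 1"
  have "zeta n ^ d = exp (of_nat d * (2 * pi * \<i> / of_nat n))"
    unfolding zeta_def by (simp only: exp_of_nat_mult)
  then have "exp (of_nat d * (2 * pi * \<i> / of_nat n)) = 1" using \<open>zeta n ^ d = 1\<close> by simp
  then obtain z :: int where z: "Im (of_nat d * (2 * pi * \<i> / of_nat n)) = of_int (2 * z) * pi"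
    unfolding exp_eq_1 by blast
  have "Im (of_nat d * (2 * pi * \<i> / of_nat n)) = 2 * pi * real d / real n"
    by (simp add: Im_divide power2_eq_square)
  with z have "2 * pi * real d / real n = 2 * pi * real_of_int z" by (simp add: mult_ac)
  then have "real d = real_of_int z * real n" using assms pi_gt_zero by (simp add: field_simps)
  then have "int d = z * int n" by (metis of_int_eq_iff of_int_mult of_int_of_nat_eq)
  moreover have "0 < int d" "int d < int n" using assms by auto
  ultimately show False
  proof (cases "z \<le> 0")
    case True
    then have "z * int n \<le> 0" by (simp add: mult_nonpos_nonneg)
    then show False using \<open>int d = z * int n\<close> \<open>0 < int d\<close> by linarith
  next
    case False
    then have "1 * int n \<le> z * int n" by (intro mult_right_mono) auto
    then show False using \<open>int d = z * int n\<close> \<open>int d < int n\<close> by linarith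
  qed
qed

lemma zeta_norm: "zeta n * cnj (zeta n) = 1"
proof -
  have "cnj (zeta n) = exp (cnj (2 * pi * \<i> / of_nat n))" unfolding zeta_def by (simp add: exp_cnj)
  also have "cnj (2 * pi * \<i> / of_nat n) = - (2 * pi * \<i> / of_nat n)" by simp
  finally show ?thesis unfolding zeta_def by (simp add: exp_minus)
qed

lemma zeta_pow_norm: "zeta n ^ m * cnj (zeta n ^ m) = 1"
  by (metis complex_cnj_power power_mult_distrib power_one zeta_norm)

lemma zeta_nonzero: "zeta n \<noteq> 0"
  unfolding zeta_def by simp

lemma zeta_pow_cong: "n > 0 \<Longrightarrow> a mod n = b mod n \<Longrightarrow> zeta n ^ a = zeta n ^ b"
  by (metis zeta_pow_mod)

lemma zeta_inj: assumes "i < n" "j < n" "zeta n ^ i = zeta n ^ j" shows "i = j"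
proof (rule ccontr)
  assume "i \<noteq> j"
  { fix i j assume ij: "i < j" "j < n" "zeta n ^ i = zeta n ^ j"
    have "zeta n ^ i * zeta n ^ (j - i) = zeta n ^ (i + (j - i))" by (simp add: power_add)
    also have "\<dots> = zeta n ^ i * 1" using ij by simp
    finally have "zeta n ^ i * zeta n ^ (j - i) = zeta n ^ i * 1" .
    then have "zeta n ^ (j - i) = 1" using zeta_nonzero by simp
    moreover have "0 < j - i" "j - i < n" using ij by auto
    ultimately have False using zeta_pow_ne1[of "j - i" n] by blast }
  then show False using assms \<open>i \<noteq> j\<close>
    by (metis linorder_neqE_nat)
qed

lemma inv_unique_cnj: "(x::complex) * cnj x = 1 \<Longrightarrow> x * y = 1 \<Longrightarrow> y = cnj x"
  by (metis mult.left_commute mult.right_neutral mult.commute)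

definition good :: "nat \<Rightarrow> cmat \<Rightarrow> bool" where
  "good N w \<longleftrightarrow> N > 0 \<and> (\<forall>i<N. \<forall>k<N. w i k * cnj (w i k) = 1) \<and>
     (\<forall>i<N. \<forall>k<N. w i k = w k i) \<and>
     (\<forall>i<N. \<forall>j<N. \<exists>l<N. \<forall>k<N. w l k = w i k * w j k) \<and>
     (\<forall>i<N. \<exists>l<N. \<forall>k<N. w l k = cnj (w i k)) \<and>
     (\<forall>i<N. \<forall>j<N. (\<Sum>k<N. w i k * cnj (w j k)) = (if i = j then of_nat N else 0))"

lemma goodD:
  assumes "good N w"
  shows good_pos: "N > 0"
    and good_unit: "\<And>i k. i < N \<Longrightarrow> k < N \<Longrightarrow> w i k * cnj (w i k) = 1"
    and good_sym: "\<And>i k. i < N \<Longrightarrow> k < N \<Longrightarrow> w i k = w k i"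
    and good_prod: "\<And>i j. i < N \<Longrightarrow> j < N \<Longrightarrow> \<exists>l<N. \<forall>k<N. w l k = w i k * w j k"
    and good_cnj: "\<And>i. i < N \<Longrightarrow> \<exists>l<N. \<forall>k<N. w l k = cnj (w i k)"
    and good_orth: "\<And>i j. i < N \<Longrightarrow> j < N \<Longrightarrow> (\<Sum>k<N. w i k * cnj (w j k)) = (if i = j then of_nat N else 0)"
  using assms unfolding good_def by auto

lemma good_fourier: assumes "n > 0" shows "good n (fourier n)"
proof -
  let ?z = "zeta n"
  have unit: "\<forall>i<n. \<forall>k<n. fourier n i k * cnj (fourier n i k) = 1"
    unfolding fourier_zeta using zeta_pow_norm by blast
  have sym: "\<forall>i<n. \<forall>k<n. fourier n i k = fourier n k i"
    by (simp add: fourier_zeta mult.commute)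
  have prod: "\<forall>i<n. \<forall>j<n. \<exists>l<n. \<forall>k<n. fourier n l k = fourier n i k * fourier n j k"
  proof (intro allI impI)
    fix i j assume "i < n" "j < n"
    show "\<exists>l<n. \<forall>k<n. fourier n l k = fourier n i k * fourier n j k"
    proof (intro exI conjI allI impI)
      show "(i + j) mod n < n" using assms by simp
      fix k
      have "?z ^ (((i + j) mod n) * k) = ?z ^ ((i+j)*k)"
        by (rule zeta_pow_cong[OF assms]) (simp add: mod_mult_left_eq)
      then show "fourier n ((i + j) mod n) k = fourier n i k * fourier n j k"
        by (simp add: fourier_zeta power_add distrib_right)
    qed
  qed
  have cnjr: "\<forall>i<n. \<exists>l<n. \<forall>k<n. fourier n l k = cnj (fourier n i k)"
  proof (intro allI impI)
    fix i assume "i < n"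
    show "\<exists>l<n. \<forall>k<n. fourier n l k = cnj (fourier n i k)"
    proof (intro exI conjI allI impI)
      show "(n - i) mod n < n" using assms by simp
      fix k
      have "?z ^ (((n - i) mod n) * k) = ?z ^ ((n - i)*k)"
        by (rule zeta_pow_cong[OF assms]) (simp add: mod_mult_left_eq)
      also have "?z ^ (i * k) * \<dots> = ?z ^ (n * k)"
        using \<open>i < n\<close> by (simp add: power_add[symmetric] distrib_right[symmetric])
      also have "\<dots> = 1" using zeta_pow_n[OF assms] by (simp add: power_mult)
      finally have "?z ^ (i * k) * ?z ^ (((n - i) mod n) * k) = 1" .
      then show "fourier n ((n - i) mod n) k = cnj (fourier n i k)"
        unfolding fourier_zeta using inv_unique_cnj zeta_pow_norm by blast
    qed
  qed
  have orth: "\<forall>i<n. \<forall>j<n. (\<Sum>k<n. fourier n i k * cnj (fourier n j k)) = (if i = j then of_nat n else 0)"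
  proof (intro allI impI)
    fix i j assume ij: "i < n" "j < n"
    define q where "q = ?z ^ i * cnj (?z ^ j)"
    have terms: "fourier n i k * cnj (fourier n j k) = q ^ k" for k
      unfolding fourier_zeta q_def
      by (simp add: power_mult power_mult_distrib complex_cnj_power mult.commute)
    have qn: "q ^ n = 1"
    proof -
      have "q ^ n = (?z ^ n) ^ i * cnj ((?z ^ n) ^ j)"
        unfolding q_def by (simp add: power_mult_distrib complex_cnj_power power_mult[symmetric] mult.commute)
      then show ?thesis using zeta_pow_n[OF assms] by simp
    qed
    show "(\<Sum>k<n. fourier n i k * cnj (fourier n j k)) = (if i = j then of_nat n else 0)"
    proof (cases "i = j")
      case True
      then have "q = 1" unfolding q_def using zeta_pow_norm by simp
      have "(\<Sum>k<n. fourier n i k * cnj (fourier n j k)) = (\<Sum>k<n. q^k)" by (simp only: terms)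
      then show ?thesis using True \<open>q = 1\<close> by simp
    next
      case False
      have "q \<noteq> 1"
      proof
        assume "q = 1"
        have "?z^i = ?z^i * (cnj(?z^j) * ?z^j)" using zeta_pow_norm[of n j] by (simp add: mult.commute)
        also have "\<dots> = q * ?z^j" unfolding q_def by (simp only: mult.assoc)
        also have "\<dots> = ?z^j" using \<open>q=1\<close> by simp
        finally have "?z ^ i = ?z ^ j" .
        then show False using zeta_inj ij False by blast
      qed
      then show ?thesis using False qn by (simp add: terms sum_gp_strict)
    qed
  qed
  show ?thesis unfolding good_def using assms unit sym prod cnjr orth by blast
qed

lemma divmod_lt: fixes i n P :: nat assumes "i < n * P" shows "i div P < n" "i mod P < P"
proof -
  have "P > 0" using assms by (cases P) auto
  then show "i mod P < P" by simp
  show "i div P < n" using assms by (simp add: less_mult_imp_div_less)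
qed

lemma comb_lt: fixes l1 l2 n P :: nat assumes "l1 < n" "l2 < P" shows "l1 * P + l2 < n * P"
proof -
  have "l1 * P + l2 < l1 * P + P" using assms by simp
  also have "\<dots> = Suc l1 * P" by simp
  also have "\<dots> \<le> n * P" using assms by (intro mult_right_mono) auto
  finally show ?thesis .
qed

lemma good_kron: assumes A: "good n A" and B: "good P B" shows "good (n*P) (kron A P B)"
proof -
  have n0: "n > 0" and P0: "P > 0" using A B unfolding good_def by auto
  note dm = divmod_lt
  have cdiv: "(l1 * P + l2) div P = l1" and cmod: "(l1 * P + l2) mod P = l2" if "l2 < P" for l1 l2
    using that by auto
  have unit: "\<forall>i<n*P. \<forall>k<n*P. kron A P B i k * cnj (kron A P B i k) = 1"
  proof (intro allI impI)
    fix i k assume "i < n*P" "k < n*P"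
    then have "A (i div P) (k div P) * cnj (A (i div P) (k div P)) = 1"
              "B (i mod P) (k mod P) * cnj (B (i mod P) (k mod P)) = 1"
      using good_unit[OF A] good_unit[OF B] dm by blast+
    then show "kron A P B i k * cnj (kron A P B i k) = 1"
      unfolding kron_def by (simp add: mult_ac)
  qed
  have sym: "\<forall>i<n*P. \<forall>k<n*P. kron A P B i k = kron A P B k i"
  proof (intro allI impI)
    fix i k assume "i < n*P" "k < n*P"
    then have "A (i div P) (k div P) = A (k div P) (i div P)"
              "B (i mod P) (k mod P) = B (k mod P) (i mod P)"
      using good_sym[OF A] good_sym[OF B] dm by blast+
    then show "kron A P B i k = kron A P B k i" unfolding kron_def by simp
  qed
  have prod: "\<forall>i<n*P. \<forall>j<n*P. \<exists>l<n*P. \<forall>k<n*P. kron A P B l k = kron A P B i k * kron A P B j k"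
  proof (intro allI impI)
    fix i j assume ij: "i < n*P" "j < n*P"
    obtain l1 where l1: "l1 < n" "\<forall>k<n. A l1 k = A (i div P) k * A (j div P) k"
      using good_prod[OF A dm(1)[OF ij(1)] dm(1)[OF ij(2)]] by blast
    obtain l2 where l2: "l2 < P" "\<forall>k<P. B l2 k = B (i mod P) k * B (j mod P) k"
      using good_prod[OF B dm(2)[OF ij(1)] dm(2)[OF ij(2)]] by blast
    show "\<exists>l<n*P. \<forall>k<n*P. kron A P B l k = kron A P B i k * kron A P B j k"
    proof (intro exI conjI allI impI)
      show "l1 * P + l2 < n * P" using comb_lt l1 l2 by blast
      fix k assume "k < n * P"
      then show "kron A P B (l1 * P + l2) k = kron A P B i k * kron A P B j k"
      proof -
        have "k div P < n" "k mod P < P" using dm \<open>k < n*P\<close> by auto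
        then show ?thesis unfolding kron_def using l1 l2 cdiv cmod by (simp add: mult_ac)
      qed
    qed
  qed
  have cnjr: "\<forall>i<n*P. \<exists>l<n*P. \<forall>k<n*P. kron A P B l k = cnj (kron A P B i k)"
  proof (intro allI impI)
    fix i assume ij: "i < n*P"
    obtain l1 where l1: "l1 < n" "\<forall>k<n. A l1 k = cnj (A (i div P) k)"
      using good_cnj[OF A dm(1)[OF ij(1)]] by blast
    obtain l2 where l2: "l2 < P" "\<forall>k<P. B l2 k = cnj (B (i mod P) k)"
      using good_cnj[OF B dm(2)[OF ij(1)]] by blast
    show "\<exists>l<n*P. \<forall>k<n*P. kron A P B l k = cnj (kron A P B i k)"
    proof (intro exI conjI allI impI)
      show "l1 * P + l2 < n * P" using comb_lt l1 l2 by blast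
      fix k assume "k < n * P"
      then show "kron A P B (l1 * P + l2) k = cnj (kron A P B i k)"
      proof -
        have "k div P < n" "k mod P < P" using dm \<open>k < n*P\<close> by auto
        then show ?thesis unfolding kron_def using l1 l2 cdiv cmod by simp
      qed
    qed
  qed
  have orth: "\<forall>i<n*P. \<forall>j<n*P. (\<Sum>k<n*P. kron A P B i k * cnj (kron A P B j k)) = (if i = j then of_nat (n*P) else 0)"
  proof (intro allI impI)
    fix i j assume ij: "i < n*P" "j < n*P"
    have "(\<Sum>k<n*P. kron A P B i k * cnj (kron A P B j k)) =
       (\<Sum>k<n*P. (\<lambda>m r. (A (i div P) m * cnj (A (j div P) m)) * (B (i mod P) r * cnj (B (j mod P) r))) (k div P) (k mod P))"
      unfolding kron_def by (simp add: mult_ac)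
    also have "\<dots> = (\<Sum>m<n. \<Sum>r<P. (A (i div P) m * cnj (A (j div P) m)) * (B (i mod P) r * cnj (B (j mod P) r)))"
      by (rule sum_split_mult_divmod[OF P0])
    also have "\<dots> = (\<Sum>m<n. A (i div P) m * cnj (A (j div P) m)) * (\<Sum>r<P. B (i mod P) r * cnj (B (j mod P) r))"
      by (simp add: sum_product)
    also have "\<dots> = (if i div P = j div P then of_nat n else 0) * (if i mod P = j mod P then of_nat P else 0)"
      using good_orth[OF A dm(1)[OF ij(1)] dm(1)[OF ij(2)]] good_orth[OF B dm(2)[OF ij(1)] dm(2)[OF ij(2)]] by simp
    also have "\<dots> = (if i = j then of_nat (n*P) else 0)"
    proof (cases "i = j")
      case False
      then have "i div P \<noteq> j div P \<or> i mod P \<noteq> j mod P" by (metis div_mult_mod_eq)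
      then show ?thesis using False by auto
    qed simp
    finally show "(\<Sum>k<n*P. kron A P B i k * cnj (kron A P B j k)) = (if i = j then of_nat (n*P) else 0)" .
  qed
  show ?thesis unfolding good_def using n0 P0 unit sym prod cnjr orth by simp
qed

lemma good_tensor: "(\<forall>n\<in>set ns. n > 0) \<Longrightarrow> good (prod_list ns) (fourier_tensor ns)"
proof (induction ns)
  case Nil
  show ?case unfolding good_def by simp
next
  case (Cons n ns)
  then show ?case by (simp add: good_kron good_fourier)
qed



lemma sum_fun_apply2: "(sum f A) i j = (\<Sum>a\<in>A. f a i j)" for f :: "'x \<Rightarrow> cmat"
  by (induct A rule: infinite_finite_induct) auto

interpretation rs: vector_space real_scale_mat
  by unfold_locales (auto simp: real_scale_mat_def fun_eq_iff algebra_simps)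

lemma real_scale_apply: "real_scale_mat r X i j = of_real r * X i j"
  by (simp add: real_scale_mat_def)

definition cas :: "cmat \<Rightarrow> nat \<Rightarrow> nat \<Rightarrow> real" where
  "cas w i k = Re (w i k) + Im (w i k)"

definition alpha :: complex where "alpha = (1 - \<i>) / 2"
definition beta :: complex where "beta = (1 + \<i>) / 2"

lemma cas_complex: "complex_of_real (cas w i k) = alpha * w i k + beta * cnj (w i k)"
  by (simp add: cas_def alpha_def beta_def complex_eq_iff field_simps)

lemma alpha_beta: "alpha * alpha + beta * beta = 0" "alpha * beta = 1/2"
  by (simp_all add: alpha_def beta_def field_simps)

lemma expand4: "(x*a + y*b)*(x*c+y*d) = x*x*(a*c) + x*y*(a*d) + x*y*(b*c) + y*y*(b*d)" for x :: complex
  by (simp add: algebra_simps)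

lemma anti_pt: "\<i> * of_real r1 * w1 * cnj w2 + cnj (\<i> * of_real r2 * w2 * cnj w1) = \<i> * (of_real (r1 - r2) * w1 * cnj w2)"
  by (simp add: algebra_simps)

lemma sum_expand4:
  "(\<Sum>k\<in>A. (x * a k + y * b k) * (x * c k + y * d k)) =
    x*x * (\<Sum>k\<in>A. a k * c k) + x*y * (\<Sum>k\<in>A. a k * d k) + x*y * (\<Sum>k\<in>A. b k * c k) + y*y * (\<Sum>k\<in>A. b k * d k)"
  for x y :: complex
proof -
  have "(\<Sum>k\<in>A. (x * a k + y * b k) * (x * c k + y * d k)) =
     (\<Sum>k\<in>A. x*x * (a k * c k) + x*y * (a k * d k) + x*y * (b k * c k) + y*y * (b k * d k))"
    by (simp only: expand4)
  also have "\<dots> = x*x * (\<Sum>k\<in>A. a k * c k) + x*y * (\<Sum>k\<in>A. a k * d k) + x*y * (\<Sum>k\<in>A. b k * c k) + y*y * (\<Sum>k\<in>A. b k * d k)"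
    by (simp add: sum.distrib sum_distrib_left)
  finally show ?thesis .
qed

locale gw =
  fixes N :: nat and w :: cmat
  assumes G: "good N w"
begin

lemma N0: "N > 0" using good_pos[OF G] .

lemma unit: "i < N \<Longrightarrow> k < N \<Longrightarrow> w i k * cnj (w i k) = 1" using good_unit[OF G] .
lemma unit': "i < N \<Longrightarrow> k < N \<Longrightarrow> cnj (w i k) * w i k = 1" using unit by (simp add: mult.commute)
lemma nz: "i < N \<Longrightarrow> k < N \<Longrightarrow> w i k \<noteq> 0" using unit by force
lemma sym: "i < N \<Longrightarrow> k < N \<Longrightarrow> w i k = w k i" using good_sym[OF G] .
lemma orth: "i < N \<Longrightarrow> j < N \<Longrightarrow> (\<Sum>k<N. w i k * cnj (w j k)) = (if i = j then of_nat N else 0)"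
  using good_orth[OF G] .

lemma cnj_row: assumes "i < N" obtains l where "l < N" "\<And>k. k < N \<Longrightarrow> w l k = cnj (w i k)"
  using good_cnj[OF G assms] by blast

lemma prod_row: assumes "i < N" "j < N" obtains l where "l < N" "\<And>k. k < N \<Longrightarrow> w l k = w i k * w j k"
  using good_prod[OF G assms] by blast

lemma row_inj: assumes "i < N" "j < N" "\<And>k. k < N \<Longrightarrow> w i k = w j k" shows "i = j"
proof (rule ccontr)
  assume "i \<noteq> j"
  have "(\<Sum>k<N. w i k * cnj (w j k)) = (\<Sum>k<N. w i k * cnj (w i k))" using assms by simp
  also have "\<dots> = of_nat N" using orth assms by simp
  finally show False using orth[OF assms(1,2)] \<open>i \<noteq> j\<close> N0 by simp
qed

lemma cas_sym: "i < N \<Longrightarrow> k < N \<Longrightarrow> cas w i k = cas w k i"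
  unfolding cas_def using sym by simp

lemma cas_orth: assumes "i < N" "j < N"
  shows "(\<Sum>k<N. cas w i k * cas w j k) = (if i = j then real N else 0)"
proof -
  obtain j' where j': "j' < N" "\<And>k. k < N \<Longrightarrow> w j' k = cnj (w j k)" using cnj_row assms(2) by blast
  have s1: "(\<Sum>k<N. w i k * w j k) = (if i = j' then of_nat N else 0)"
    using orth[OF assms(1) j'(1)] j'(2) by simp
  have s2: "(\<Sum>k<N. w i k * cnj (w j k)) = (if i = j then of_nat N else 0)" using orth assms by simp
  have s3: "(\<Sum>k<N. cnj (w i k) * w j k) = (if i = j then of_nat N else 0)"
  proof -
    have "(\<Sum>k<N. cnj (w i k) * w j k) = cnj (\<Sum>k<N. w i k * cnj (w j k))" by simp
    then show ?thesis using s2 by simp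
  qed
  have s4: "(\<Sum>k<N. cnj (w i k) * cnj (w j k)) = (if i = j' then of_nat N else 0)"
  proof -
    have "(\<Sum>k<N. cnj (w i k) * cnj (w j k)) = cnj (\<Sum>k<N. w i k * w j k)" by simp
    then show ?thesis using s1 by simp
  qed
  have "complex_of_real (\<Sum>k<N. cas w i k * cas w j k) =
     (\<Sum>k<N. (alpha * w i k + beta * cnj (w i k)) * (alpha * w j k + beta * cnj (w j k)))"
    by (simp add: cas_complex)
  also have "\<dots> = (alpha * alpha + beta * beta) * (if i = j' then of_nat N else 0) + 2 * (alpha * beta) * (if i = j then of_nat N else 0)"
  proof -
    have gen: "\<And>X Y. alpha*alpha*X + alpha*beta*Y + alpha*beta*Y + beta*beta*X = (alpha*alpha+beta*beta)*X + 2*(alpha*beta)*Y"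
      by (simp add: algebra_simps)
    show ?thesis unfolding sum_expand4 s1 s2 s3 s4 by (rule gen)
  qed
  also have "\<dots> = complex_of_real (if i = j then real N else 0)"
    using alpha_beta by (simp add: mult.commute)
  finally show ?thesis using of_real_eq_iff by blast
qed

lemma cas_orth2: assumes "i < N" "j < N"
  shows "(\<Sum>k<N. cas w k i * cas w k j) = (if i = j then real N else 0)"
proof -
  have "(\<Sum>k<N. cas w k i * cas w k j) = (\<Sum>k<N. cas w i k * cas w j k)"
    using assms by (intro sum.cong) (auto simp: cas_sym)
  then show ?thesis using cas_orth[OF assms] by simp
qed

definition cond :: "(nat \<Rightarrow> nat \<Rightarrow> real) \<Rightarrow> bool" where
  "cond R \<longleftrightarrow> (\<forall>i<N. \<forall>j<N. (\<Sum>k<N. of_real (R i k - R j k) * w i k * cnj (w j k)) = 0)"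

lemma mma_eq: "i < N \<Longrightarrow> mat_mult_adj N (iR_had N R w) w i j = (\<Sum>k<N. \<i> * of_real (R i k) * w i k * cnj (w j k))"
  unfolding mat_mult_adj_def iR_had_def by (intro sum.cong) auto

lemma anti_iff: "antihermitian N (mat_mult_adj N (iR_had N R w) w) \<longleftrightarrow> cond R"
proof -
  have key: "mat_mult_adj N (iR_had N R w) w i j + cnj (mat_mult_adj N (iR_had N R w) w j i)
     = \<i> * (\<Sum>k<N. of_real (R i k - R j k) * w i k * cnj (w j k))" if "i < N" "j < N" for i j
  proof -
    have "mat_mult_adj N (iR_had N R w) w i j + cnj (mat_mult_adj N (iR_had N R w) w j i)
       = (\<Sum>k<N. \<i> * of_real (R i k) * w i k * cnj (w j k)) + cnj (\<Sum>k<N. \<i> * of_real (R j k) * w j k * cnj (w i k))"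
      using that by (simp only: mma_eq)
    also have "\<dots> = (\<Sum>k<N. \<i> * of_real (R i k) * w i k * cnj (w j k)) + (\<Sum>k<N. cnj (\<i> * of_real (R j k) * w j k * cnj (w i k)))"
      by (simp only: cnj_sum)
    also have "\<dots> = (\<Sum>k<N. \<i> * of_real (R i k) * w i k * cnj (w j k) + cnj (\<i> * of_real (R j k) * w j k * cnj (w i k)))"
      by (simp only: sum.distrib)
    also have "\<dots> = (\<Sum>k<N. \<i> * (of_real (R i k - R j k) * w i k * cnj (w j k)))"
      by (simp only: anti_pt)
    also have "\<dots> = \<i> * (\<Sum>k<N. of_real (R i k - R j k) * w i k * cnj (w j k))"
      by (simp only: sum_distrib_left)
    finally show ?thesis .
  qed
  have "(mat_mult_adj N (iR_had N R w) w i j = - cnj (mat_mult_adj N (iR_had N R w) w j i)) \<longleftrightarrow>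
        (\<Sum>k<N. of_real (R i k - R j k) * w i k * cnj (w j k)) = 0" if "i < N" "j < N" for i j
  proof -
    have "(mat_mult_adj N (iR_had N R w) w i j = - cnj (mat_mult_adj N (iR_had N R w) w j i)) \<longleftrightarrow>
       mat_mult_adj N (iR_had N R w) w i j + cnj (mat_mult_adj N (iR_had N R w) w j i) = 0"
      by (simp add: eq_neg_iff_add_eq_0)
    then show ?thesis using key[OF that] by simp
  qed
  then show ?thesis unfolding antihermitian_def cond_def by blast
qed

end


context gw begin

definition Iset :: "(nat \<times> nat) set" where
  "Iset = {(e,k). e < N \<and> k < N \<and> w e k = 1}"

definition Bm :: "nat \<Rightarrow> nat \<Rightarrow> nat \<Rightarrow> nat \<Rightarrow> real" where
  "Bm e k = (\<lambda>i j. cas w k i * cas w e j)"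

definition Bv :: "nat \<times> nat \<Rightarrow> cmat" where
  "Bv p = iR_had N (Bm (fst p) (snd p)) w"

definition Lf :: "nat \<Rightarrow> nat \<Rightarrow> cmat \<Rightarrow> complex" where
  "Lf e k X = (\<Sum>i<N. \<Sum>j<N. X i j * cnj (w i j) * (- \<i>) * of_real (cas w k i * cas w e j))"

lemma Iset_sub: "Iset \<subseteq> {..<N} \<times> {..<N}" unfolding Iset_def by auto
lemma finite_Iset: "finite Iset" using Iset_sub finite_subset by blast

lemma same_col: assumes "i < N" "j < N" "k < N" "w i k * cnj (w j k) = 1"
  shows "cas w k i = cas w k j"
proof -
  have "w i k = w i k * (cnj (w j k) * w j k)" using unit'[OF assms(2,3)] by simp
  also have "\<dots> = w j k" using assms(4) by (simp add: mult.assoc[symmetric])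
  finally have "w i k = w j k" .
  then have "cas w i k = cas w j k" unfolding cas_def by simp
  then show ?thesis using cas_sym assms by simp
qed

lemma Bm_cond: assumes "(e,k) \<in> Iset" shows "cond (Bm e k)"
  unfolding cond_def
proof (intro allI impI)
  fix i j assume ij: "i < N" "j < N"
  from assms have ek: "e < N" "k < N" "w e k = 1" unfolding Iset_def by auto
  have "(\<Sum>l<N. of_real (Bm e k i l - Bm e k j l) * w i l * cnj (w j l))
      = (\<Sum>l<N. of_real (cas w k i - cas w k j) * (of_real (cas w e l) * (w i l * cnj (w j l))))"
    unfolding Bm_def by (intro sum.cong refl) (simp add: algebra_simps)
  also have "\<dots> = of_real (cas w k i - cas w k j) * (\<Sum>l<N. of_real (cas w e l) * (w i l * cnj (w j l)))"
    by (simp only: sum_distrib_left)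
  also have "\<dots> = 0"
  proof (cases "cas w k i = cas w k j")
    case True then show ?thesis by simp
  next
    case False
    obtain j' where j': "j' < N" "\<And>l. l < N \<Longrightarrow> w j' l = cnj (w j l)" using cnj_row ij(2) by blast
    obtain d where d: "d < N" "\<And>l. l < N \<Longrightarrow> w d l = w i l * w j' l" using prod_row ij(1) j'(1) by blast
    obtain e' where e': "e' < N" "\<And>l. l < N \<Longrightarrow> w e' l = cnj (w e l)" using cnj_row ek(1) by blast
    have dl: "w d l = w i l * cnj (w j l)" if "l < N" for l using d j' that by simp
    have "d \<noteq> e"
    proof
      assume "d = e"
      then have "w i k * cnj (w j k) = 1" using dl ek by simp
      then show False using same_col ij ek False by blast
    qed
    have "d \<noteq> e'"
    proof
      assume "d = e'"
      have "w i k * cnj (w j k) = w d k" using dl ek by simp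
      also have "\<dots> = cnj (w e k)" using \<open>d = e'\<close> e' ek by simp
      finally have "w i k * cnj (w j k) = 1" using ek by simp
      then show False using same_col ij ek False by blast
    qed
    have s1: "(\<Sum>l<N. w d l * cnj (w e' l)) = 0" using orth[OF d(1) e'(1)] \<open>d \<noteq> e'\<close> by simp
    have s2: "(\<Sum>l<N. w d l * cnj (w e l)) = 0" using orth[OF d(1) ek(1)] \<open>d \<noteq> e\<close> by simp
    have "(\<Sum>l<N. of_real (cas w e l) * (w i l * cnj (w j l)))
       = (\<Sum>l<N. alpha * (w d l * cnj (w e' l)) + beta * (w d l * cnj (w e l)))"
      by (intro sum.cong refl) (simp add: cas_complex dl e' algebra_simps)
    also have "\<dots> = alpha * (\<Sum>l<N. w d l * cnj (w e' l)) + beta * (\<Sum>l<N. w d l * cnj (w e l))"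
      by (simp add: sum.distrib sum_distrib_left)
    also have "\<dots> = 0" using s1 s2 by simp
    finally show ?thesis by simp
  qed
  finally show "(\<Sum>l<N. of_real (Bm e k i l - Bm e k j l) * w i l * cnj (w j l)) = 0" .
qed

lemma Bv_in: assumes "p \<in> Iset" shows "Bv p \<in> {iR_had N R w | R. antihermitian N (mat_mult_adj N (iR_had N R w) w)}"
proof -
  obtain e k where p: "p = (e,k)" by force
  show ?thesis unfolding Bv_def p using Bm_cond[of e k] assms p anti_iff by auto
qed

lemma Lf_iR: "Lf e k (iR_had N R w) = of_real (\<Sum>i<N. \<Sum>j<N. R i j * cas w k i * cas w e j)"
proof -
  have "Lf e k (iR_had N R w) = (\<Sum>i<N. \<Sum>j<N. of_real (R i j * cas w k i * cas w e j))"
    unfolding Lf_def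
  proof (intro sum.cong refl)
    fix i j assume "i \<in> {..<N}" "j \<in> {..<N}"
    then have u: "w i j * cnj (w i j) = 1" using unit by auto
    have "iR_had N R w i j * cnj (w i j) * - \<i> * complex_of_real (cas w k i * cas w e j)
       = (- \<i> * \<i>) * complex_of_real (R i j) * (w i j * cnj (w i j)) * complex_of_real (cas w k i * cas w e j)"
      using \<open>i \<in> _\<close> \<open>j \<in> _\<close> unfolding iR_had_def by (simp add: mult_ac)
    also have "\<dots> = complex_of_real (R i j * cas w k i * cas w e j)" using u by simp
    finally show "iR_had N R w i j * cnj (w i j) * - \<i> * complex_of_real (cas w k i * cas w e j)
       = complex_of_real (R i j * cas w k i * cas w e j)" .
  qed
  then show ?thesis by simp
qed

lemma Lf_sum: "Lf e k (sum f T) = (\<Sum>v\<in>T. Lf e k (f v))"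
proof (induct T rule: infinite_finite_induct)
  case (infinite A) then show ?case by (simp add: Lf_def)
next
  case empty then show ?case by (simp add: Lf_def)
next
  case (insert x F)
  have "Lf e k (sum f (insert x F)) = Lf e k (f x + sum f F)" using insert by simp
  also have "\<dots> = Lf e k (f x) + Lf e k (sum f F)"
    unfolding Lf_def by (simp only: plus_fun_apply distrib_right sum.distrib)
  also have "\<dots> = Lf e k (f x) + (\<Sum>v\<in>F. Lf e k (f v))" using insert(3) by (simp only:)
  also have "\<dots> = (\<Sum>v\<in>insert x F. Lf e k (f v))" using insert(1,2) by simp
  finally show ?case .
qed

lemma Lf_scale: "Lf e k (real_scale_mat r X) = of_real r * Lf e k X"
  unfolding Lf_def real_scale_mat_def by (simp add: sum_distrib_left mult_ac)

lemma Lf_B: assumes "e < N" "k < N" "e' < N" "k' < N"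
  shows "Lf e' k' (Bv (e,k)) = (if e = e' \<and> k = k' then of_nat N * of_nat N else 0)"
proof -
  have "Lf e' k' (Bv (e,k)) = of_real (\<Sum>i<N. \<Sum>j<N. (cas w k i * cas w k' i) * (cas w e j * cas w e' j))"
    unfolding Bv_def Lf_iR Bm_def by (simp add: mult_ac)
  also have "\<dots> = of_real ((\<Sum>i<N. cas w k i * cas w k' i) * (\<Sum>j<N. cas w e j * cas w e' j))"
    by (simp add: sum_product)
  also have "\<dots> = (if e = e' \<and> k = k' then of_nat N * of_nat N else 0)"
    using cas_orth assms by simp
  finally show ?thesis .
qed

lemma Bv_inj: "inj_on Bv Iset"
proof (rule inj_onI)
  fix p q assume "p \<in> Iset" "q \<in> Iset" "Bv p = Bv q"
  obtain e k where p: "p = (e,k)" by force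
  obtain e' k' where q: "q = (e',k')" by force
  have lt: "e < N" "k < N" "e' < N" "k' < N" using \<open>p \<in> Iset\<close> \<open>q \<in> Iset\<close> p q Iset_sub by auto
  have "Lf e' k' (Bv (e,k)) = Lf e' k' (Bv (e',k'))" using \<open>Bv p = Bv q\<close> p q by simp
  then have "(if e = e' \<and> k = k' then of_nat N * of_nat N else 0) = (of_nat N * of_nat N :: complex)"
    using Lf_B lt by simp
  then show "p = q" using p q N0 by (auto split: if_splits)
qed

lemma Bv_indep: "rs.independent (Bv ` Iset)"
proof (rule rs.independent_if_scalars_zero)
  show "finite (Bv ` Iset)" using finite_Iset by simp
  fix f x assume sum0: "(\<Sum>x\<in>Bv ` Iset. real_scale_mat (f x) x) = 0" and x: "x \<in> Bv ` Iset"
  obtain p where p: "p \<in> Iset" "x = Bv p" using x by blast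
  obtain e k where ek: "p = (e,k)" by force
  have lt: "e < N" "k < N" using p ek Iset_sub by auto
  have "(\<Sum>x\<in>Bv ` Iset. real_scale_mat (f x) x) = (\<Sum>q\<in>Iset. real_scale_mat (f (Bv q)) (Bv q))"
    by (rule sum.reindex[OF Bv_inj, unfolded comp_def])
  then have "0 = Lf e k (\<Sum>q\<in>Iset. real_scale_mat (f (Bv q)) (Bv q))" using sum0 by (simp add: Lf_def)
  also have "\<dots> = (\<Sum>q\<in>Iset. of_real (f (Bv q)) * Lf e k (Bv q))"
    by (simp add: Lf_sum Lf_scale)
  also have "\<dots> = (\<Sum>q\<in>Iset. if q = p then of_real (f (Bv p)) * (of_nat N * of_nat N) else 0)"
  proof (intro sum.cong refl)
    fix q assume "q \<in> Iset"
    obtain e' k' where q: "q = (e',k')" by force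
    have "e' < N" "k' < N" using \<open>q \<in> Iset\<close> q Iset_sub by auto
    then show "of_real (f (Bv q)) * Lf e k (Bv q) = (if q = p then of_real (f (Bv p)) * (of_nat N * of_nat N) else 0)"
      using Lf_B[of e' k' e k] lt q ek by auto
  qed
  also have "\<dots> = of_real (f (Bv p)) * (of_nat N * of_nat N)" using p(1) finite_Iset by simp
  finally show "f x = 0" using N0 p by simp
qed

end


lemma swap4: "(\<Sum>e\<in>A. \<Sum>k\<in>B. \<Sum>i\<in>C. \<Sum>j\<in>D. f e k i j) = (\<Sum>i\<in>C. \<Sum>j\<in>D. \<Sum>e\<in>A. \<Sum>k\<in>B. f e k i j)"
proof -
  have "(\<Sum>e\<in>A. \<Sum>k\<in>B. \<Sum>i\<in>C. \<Sum>j\<in>D. f e k i j) = (\<Sum>e\<in>A. \<Sum>i\<in>C. \<Sum>k\<in>B. \<Sum>j\<in>D. f e k i j)"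
    by (rule sum.cong[OF refl], rule sum.swap)
  also have "\<dots> = (\<Sum>i\<in>C. \<Sum>e\<in>A. \<Sum>k\<in>B. \<Sum>j\<in>D. f e k i j)"
    by (rule sum.swap)
  also have "\<dots> = (\<Sum>i\<in>C. \<Sum>e\<in>A. \<Sum>j\<in>D. \<Sum>k\<in>B. f e k i j)"
    by (rule sum.cong[OF refl], rule sum.cong[OF refl], rule sum.swap)
  also have "\<dots> = (\<Sum>i\<in>C. \<Sum>j\<in>D. \<Sum>e\<in>A. \<Sum>k\<in>B. f e k i j)"
    by (rule sum.cong[OF refl], rule sum.swap)
  finally show ?thesis .
qed

context gw begin

lemma coef_zero: assumes "cond R" "e < N" "k < N" "w e k \<noteq> 1"
  shows "(\<Sum>i<N. \<Sum>j<N. R i j * cas w k i * cas w e j) = 0"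
proof -
  define sig where "sig i = (SOME l. l < N \<and> (\<forall>m<N. w l m = w i m * w e m))" for i
  have sig: "sig i < N \<and> (\<forall>m<N. w (sig i) m = w i m * w e m)" if "i < N" for i
    unfolding sig_def by (rule someI_ex) (use good_prod[OF G that assms(2)] in blast)
  define h where "h i = (\<Sum>l<N. of_real (R i l) * w e l)" for i
  define g where "g i = (\<Sum>j<N. R i j * cas w e j)" for i
  have h_sig: "h (sig i) = h i" if "i < N" for i
  proof -
    have c: "(\<Sum>l<N. of_real (R (sig i) l - R i l) * w (sig i) l * cnj (w i l)) = 0"
      using assms(1) sig[OF that] that unfolding cond_def by blast
    have "(\<Sum>l<N. of_real (R (sig i) l - R i l) * w (sig i) l * cnj (w i l))
        = (\<Sum>l<N. of_real (R (sig i) l) * w e l - of_real (R i l) * w e l)"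
    proof (intro sum.cong refl)
      fix l assume "l \<in> {..<N}"
      then have "w (sig i) l * cnj (w i l) = w e l"
        using sig[OF that] unit[OF that] by (simp add: mult_ac)
      then show "of_real (R (sig i) l - R i l) * w (sig i) l * cnj (w i l) = of_real (R (sig i) l) * w e l - of_real (R i l) * w e l"
        by (simp add: mult.assoc left_diff_distrib)
    qed
    also have "\<dots> = h (sig i) - h i" unfolding h_def by (simp add: sum_subtractf)
    finally show ?thesis using c by simp
  qed
  have g_h: "g i = Re (h i) + Im (h i)" for i
    unfolding g_def h_def cas_def by (simp add: sum.distrib distrib_left)
  have g_sig: "g (sig i) = g i" if "i < N" for i using g_h h_sig that by simp
  have inj: "inj_on sig {..<N}"
  proof (rule inj_onI)
    fix i i' assume "i \<in> {..<N}" "i' \<in> {..<N}" "sig i = sig i'"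
    then have "w i m = w i' m" if "m < N" for m
      using sig[of i] sig[of i'] nz[OF assms(2) that] that by auto
    then show "i = i'" using row_inj \<open>i \<in> _\<close> \<open>i' \<in> _\<close> by blast
  qed
  have img: "sig ` {..<N} = {..<N}"
    by (rule endo_inj_surj) (use sig inj in auto)
  define T where "T = (\<Sum>i<N. of_real (g i) * w k i)"
  have "T = (\<Sum>i\<in>sig ` {..<N}. of_real (g i) * w k i)" unfolding T_def img ..
  also have "\<dots> = (\<Sum>i<N. of_real (g (sig i)) * w k (sig i))"
    by (simp add: sum.reindex[OF inj])
  also have "\<dots> = (\<Sum>i<N. of_real (g i) * w k i * w e k)"
  proof (intro sum.cong refl)
    fix i assume "i \<in> {..<N}"
    then have "w k (sig i) = w k i * w e k"
      using sig[of i] sym assms(3) by auto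
    then show "of_real (g (sig i)) * w k (sig i) = of_real (g i) * w k i * w e k"
      using g_sig \<open>i \<in> _\<close> by (simp add: mult.assoc)
  qed
  also have "\<dots> = T * w e k" unfolding T_def by (simp add: sum_distrib_right)
  finally have "T * (1 - w e k) = 0" by (simp add: algebra_simps)
  then have T0: "T = 0" using assms(4) by simp
  have "complex_of_real (\<Sum>i<N. g i * cas w k i) = (\<Sum>i<N. of_real (g i) * (alpha * w k i + beta * cnj (w k i)))"
    by (simp add: cas_complex)
  also have "\<dots> = alpha * T + beta * cnj T"
    unfolding T_def by (simp add: sum.distrib sum_distrib_left algebra_simps)
  also have "\<dots> = 0" using T0 by simp
  finally have "(\<Sum>i<N. g i * cas w k i) = 0" by (simp only: of_real_eq_0_iff)
  moreover have "(\<Sum>i<N. \<Sum>j<N. R i j * cas w k i * cas w e j) = (\<Sum>i<N. g i * cas w k i)"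
    unfolding g_def by (simp add: sum_distrib_left mult_ac)
  ultimately show ?thesis by simp
qed

lemma inversion: assumes "i < N" "j < N"
  shows "(\<Sum>e<N. \<Sum>k<N. ((\<Sum>i'<N. \<Sum>j'<N. R i' j' * cas w k i' * cas w e j') / (real N * real N)) * (cas w k i * cas w e j)) = R i j"
proof -
  have "(\<Sum>e<N. \<Sum>k<N. ((\<Sum>i'<N. \<Sum>j'<N. R i' j' * cas w k i' * cas w e j') / (real N * real N)) * (cas w k i * cas w e j))
     = (\<Sum>e<N. \<Sum>k<N. \<Sum>i'<N. \<Sum>j'<N. (R i' j' / (real N * real N)) * (cas w k i' * cas w k i) * (cas w e j' * cas w e j))"
  proof (intro sum.cong refl)
    fix e k
    have gen: "(\<Sum>a\<in>A. \<Sum>b\<in>B. f a b) / d * c = (\<Sum>a\<in>A. \<Sum>b\<in>B. f a b * (c / d))" for A B f and c d :: real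
      by (simp add: sum_distrib_right sum_divide_distrib)
    show "((\<Sum>i'<N. \<Sum>j'<N. R i' j' * cas w k i' * cas w e j') / (real N * real N)) * (cas w k i * cas w e j)
       = (\<Sum>i'<N. \<Sum>j'<N. (R i' j' / (real N * real N)) * (cas w k i' * cas w k i) * (cas w e j' * cas w e j))"
      unfolding gen by (intro sum.cong refl) (simp add: divide_inverse mult_ac)
  qed
  also have "\<dots> = (\<Sum>i'<N. \<Sum>j'<N. \<Sum>e<N. \<Sum>k<N. (R i' j' / (real N * real N)) * (cas w k i' * cas w k i) * (cas w e j' * cas w e j))"
    by (rule swap4)
  also have "\<dots> = (\<Sum>i'<N. \<Sum>j'<N. (R i' j' / (real N * real N)) * ((\<Sum>k<N. cas w k i' * cas w k i) * (\<Sum>e<N. cas w e j' * cas w e j)))"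
    by (simp add: sum_product sum_distrib_left mult_ac)
  also have "\<dots> = (\<Sum>i'<N. \<Sum>j'<N. if i' = i \<and> j' = j then R i j else 0)"
    using assms N0 by (intro sum.cong refl) (auto simp: cas_orth2)
  also have "\<dots> = (\<Sum>i'<N. if i' = i then (\<Sum>j'<N. if j' = j then R i j else 0) else 0)"
    by (intro sum.cong refl) auto
  also have "\<dots> = R i j" using assms by simp
  finally show ?thesis .
qed

lemma span_in: assumes "X \<in> {iR_had N R w | R. antihermitian N (mat_mult_adj N (iR_had N R w) w)}"
  shows "X \<in> rs.span (Bv ` Iset)"
proof -
  obtain R where X: "X = iR_had N R w" and c: "cond R" using assms anti_iff by auto
  define c where "c p = (\<Sum>i'<N. \<Sum>j'<N. R i' j' * cas w (snd p) i' * cas w (fst p) j') / (real N * real N)" for p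
  have eq: "X = (\<Sum>p\<in>Iset. real_scale_mat (c p) (Bv p))"
  proof (intro ext)
    fix i j
    show "X i j = (\<Sum>p\<in>Iset. real_scale_mat (c p) (Bv p)) i j"
    proof (cases "i < N \<and> j < N")
      case False
      then show ?thesis unfolding X sum_fun_apply2 real_scale_apply Bv_def iR_had_def by (simp only: if_False if_not_P[OF False] mult_zero_right sum.neutral_const)
    next
      case True
      have "(\<Sum>p\<in>Iset. real_scale_mat (c p) (Bv p)) i j = (\<Sum>p\<in>Iset. of_real (c p) * (\<i> * of_real (Bm (fst p) (snd p) i j) * w i j))"
        unfolding sum_fun_apply2 real_scale_apply Bv_def iR_had_def using True by simp
      also have "\<dots> = \<i> * of_real (\<Sum>p\<in>Iset. c p * Bm (fst p) (snd p) i j) * w i j"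
        by (simp add: sum_distrib_left sum_distrib_right mult_ac)
      also have "(\<Sum>p\<in>Iset. c p * Bm (fst p) (snd p) i j) = (\<Sum>p\<in>{..<N} \<times> {..<N}. c p * Bm (fst p) (snd p) i j)"
      proof (rule sum.mono_neutral_left)
        show "finite ({..<N} \<times> {..<N})" by simp
        show "Iset \<subseteq> {..<N} \<times> {..<N}" by (rule Iset_sub)
        show "\<forall>p\<in>{..<N} \<times> {..<N} - Iset. c p * Bm (fst p) (snd p) i j = 0"
        proof
          fix p assume p: "p \<in> {..<N} \<times> {..<N} - Iset"
          obtain e k where ek: "p = (e,k)" by force
          have "e < N" "k < N" "w e k \<noteq> 1" using p ek unfolding Iset_def by auto
          then have "c p = 0" unfolding c_def ek using coef_zero[OF c] by simp
          then show "c p * Bm (fst p) (snd p) i j = 0" by simp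
        qed
      qed
      also have "\<dots> = (\<Sum>e<N. \<Sum>k<N. c (e,k) * Bm e k i j)"
        by (simp add: sum.cartesian_product case_prod_beta)
      also have "\<dots> = R i j" unfolding c_def Bm_def using inversion True by simp
      finally show ?thesis unfolding X iR_had_def using True by (simp add: mult_ac)
    qed
  qed
  show ?thesis unfolding eq
    by (intro rs.span_sum rs.span_scale rs.span_base) auto
qed

theorem defect_eq: "undephased_defect N w = card Iset"
  unfolding undephased_defect_def
proof (rule rs.dim_unique[of "Bv ` Iset"])
  show "Bv ` Iset \<subseteq> {iR_had N R w | R. antihermitian N (mat_mult_adj N (iR_had N R w) w)}"
    using Bv_in by blast
  show "{iR_had N R w | R. antihermitian N (mat_mult_adj N (iR_had N R w) w)} \<subseteq> rs.span (Bv ` Iset)"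
    using span_in by blast
  show "rs.independent (Bv ` Iset)" by (rule Bv_indep)
  show "card (Bv ` Iset) = card Iset" by (rule card_image[OF Bv_inj])
qed

end


lemma zeta_pow_eq1_iff: assumes "n > 0" shows "zeta n ^ m = 1 \<longleftrightarrow> n dvd m"
proof
  assume "n dvd m"
  then obtain c where "m = n * c" by blast
  then show "zeta n ^ m = 1" using zeta_pow_n[OF assms] by (simp add: power_mult)
next
  assume h: "zeta n ^ m = 1"
  show "n dvd m"
  proof (rule ccontr)
    assume "\<not> n dvd m"
    then have "0 < m mod n" "m mod n < n" using assms by (auto simp: mod_greater_zero_iff_not_dvd)
    then have "zeta n ^ (m mod n) \<noteq> 1" by (rule zeta_pow_ne1)
    then show False using h zeta_pow_mod[OF assms, of m] by simp
  qed
qed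

lemma card_dvd_mult: assumes "n > 0" shows "card {e. e < n \<and> n dvd e * t} = gcd n t"
proof -
  define g where "g = gcd n t"
  have g0: "g > 0" using assms unfolding g_def by simp
  obtain d where nd: "n = d * g" unfolding g_def by (metis gcd_dvd1 dvd_def mult.commute)
  obtain t' where tt: "t = t' * g" unfolding g_def by (metis gcd_dvd2 dvd_def mult.commute)
  have cop: "coprime d t'"
  proof -
    have "gcd n t = gcd d t' * g" using nd tt by (simp add: gcd_mult_distrib_nat mult.commute)
    then have "gcd d t' = 1" using g0 assms unfolding g_def by auto
    then show ?thesis by (simp add: coprime_iff_gcd_eq_1)
  qed
  have d0: "d > 0" using nd assms by simp
  have iff: "n dvd e * t \<longleftrightarrow> d dvd e" for e
  proof -
    have "n dvd e * t \<longleftrightarrow> d * g dvd (e * t') * g" using nd tt by (simp add: mult_ac)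
    also have "\<dots> \<longleftrightarrow> d dvd e * t'" using g0 by simp
    also have "\<dots> \<longleftrightarrow> d dvd e" using cop by (simp add: coprime_dvd_mult_left_iff)
    finally show ?thesis .
  qed
  have "{e. e < n \<and> n dvd e * t} = (\<lambda>q. d * q) ` {..<g}"
  proof (intro set_eqI iffI)
    fix e assume "e \<in> {e. e < n \<and> n dvd e * t}"
    then obtain q where "e = d * q" "e < n" using iff by (auto elim!: dvdE)
    then have "q < g" using nd d0 by simp
    then show "e \<in> (\<lambda>q. d * q) ` {..<g}" using \<open>e = d * q\<close> by blast
  next
    fix e assume "e \<in> (\<lambda>q. d * q) ` {..<g}"
    then obtain q where "q < g" "e = d * q" by blast
    then have "e < n" using nd d0 by simp
    moreover have "d dvd e" using \<open>e = d * q\<close> by simp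
    ultimately show "e \<in> {e. e < n \<and> n dvd e * t}" using iff by blast
  qed
  moreover have "inj_on (\<lambda>q. d * q) {..<g}" using d0 by (simp add: inj_on_def)
  ultimately show ?thesis unfolding g_def by (simp add: card_image g_def[symmetric])
qed

lemma Zf_eq: assumes "n > 0"
  shows "(\<Sum>e<n. \<Sum>k<n. fourier n e k ^ t) = of_nat (n * gcd n t)"
proof -
  have inner: "(\<Sum>k<n. fourier n e k ^ t) = (if n dvd e * t then of_nat n else 0)" for e
  proof -
    define q where "q = zeta n ^ (e * t)"
    have "(\<Sum>k<n. fourier n e k ^ t) = (\<Sum>k<n. q ^ k)"
      unfolding fourier_zeta q_def by (simp add: power_mult[symmetric] mult_ac)
    also have "\<dots> = (if n dvd e * t then of_nat n else 0)"
    proof -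
      have qn: "q ^ n = 1" unfolding q_def using zeta_pow_n[OF assms]
        by (metis mult.commute power_mult power_one)
      have "q = 1 \<longleftrightarrow> n dvd e * t" unfolding q_def using zeta_pow_eq1_iff[OF assms] by simp
      then show ?thesis using qn by (simp add: sum_gp_strict)
    qed
    finally show ?thesis .
  qed
  have "(\<Sum>e<n. \<Sum>k<n. fourier n e k ^ t) = (\<Sum>e<n. if n dvd e * t then of_nat n else 0)"
    by (simp add: inner)
  also have "\<dots> = of_nat n * of_nat (card {e. e < n \<and> n dvd e * t})"
    by (simp add: sum.If_cases Int_def lessThan_def conj_commute)
  also have "\<dots> = of_nat (n * gcd n t)" using card_dvd_mult[OF assms] by simp
  finally show ?thesis .
qed

lemma Z_tensor: assumes "\<forall>n\<in>set ns. n > 0"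
  shows "(\<Sum>e<prod_list ns. \<Sum>k<prod_list ns. fourier_tensor ns e k ^ t) = of_nat (prod_list ns * prod_list (map (\<lambda>n. gcd n t) ns))"
  using assms
proof (induction ns)
  case Nil then show ?case by simp
next
  case (Cons n ns)
  define P where "P = prod_list ns"
  have "0 \<notin> set ns" using Cons.prems by auto
  then have "P \<noteq> 0" unfolding P_def by (simp add: prod_list_zero_iff)
  then have P0: "P > 0" by simp
  have n0: "n > 0" using Cons.prems by simp
  have "(\<Sum>e<n * P. \<Sum>k<n * P. kron (fourier n) P (fourier_tensor ns) e k ^ t)
      = (\<Sum>e<n * P. \<Sum>k<n * P. fourier n (e div P) (k div P) ^ t * fourier_tensor ns (e mod P) (k mod P) ^ t)"
    unfolding kron_def by (simp add: power_mult_distrib)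
  also have "\<dots> = (\<Sum>e<n * P. \<Sum>k1<n. \<Sum>k2<P. fourier n (e div P) k1 ^ t * fourier_tensor ns (e mod P) k2 ^ t)"
  proof (rule sum.cong[OF refl])
    fix e
    show "(\<Sum>k<n * P. fourier n (e div P) (k div P) ^ t * fourier_tensor ns (e mod P) (k mod P) ^ t)
      = (\<Sum>k1<n. \<Sum>k2<P. fourier n (e div P) k1 ^ t * fourier_tensor ns (e mod P) k2 ^ t)"
      using sum_split_mult_divmod[OF P0, of "\<lambda>k1 k2. fourier n (e div P) k1 ^ t * fourier_tensor ns (e mod P) k2 ^ t" n] by simp
  qed
  also have "\<dots> = (\<Sum>e1<n. \<Sum>e2<P. \<Sum>k1<n. \<Sum>k2<P. fourier n e1 k1 ^ t * fourier_tensor ns e2 k2 ^ t)"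
    using sum_split_mult_divmod[OF P0, of "\<lambda>e1 e2. \<Sum>k1<n. \<Sum>k2<P. fourier n e1 k1 ^ t * fourier_tensor ns e2 k2 ^ t" n] by simp
  also have "\<dots> = (\<Sum>e1<n. \<Sum>k1<n. fourier n e1 k1 ^ t) * (\<Sum>e2<P. \<Sum>k2<P. fourier_tensor ns e2 k2 ^ t)"
  proof -
    have "(\<Sum>e1<n. \<Sum>e2<P. \<Sum>k1<n. \<Sum>k2<P. fourier n e1 k1 ^ t * fourier_tensor ns e2 k2 ^ t)
        = (\<Sum>e1<n. \<Sum>e2<P. (\<Sum>k1<n. fourier n e1 k1 ^ t) * (\<Sum>k2<P. fourier_tensor ns e2 k2 ^ t))"
      by (simp add: sum_product)
    also have "\<dots> = (\<Sum>e1<n. (\<Sum>k1<n. fourier n e1 k1 ^ t)) * (\<Sum>e2<P. (\<Sum>k2<P. fourier_tensor ns e2 k2 ^ t))"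
      by (simp add: sum_product)
    finally show ?thesis .
  qed
  also have "\<dots> = of_nat (n * gcd n t) * of_nat (P * prod_list (map (\<lambda>n. gcd n t) ns))"
    using Zf_eq[OF n0] Cons P_def by simp
  finally show ?case unfolding P_def by (simp add: mult_ac)
qed

lemma tensor_pow_one: assumes "\<forall>n\<in>set ns. n > 0 \<and> n dvd M"
  shows "fourier_tensor ns i j ^ M = 1"
  using assms
proof (induction ns arbitrary: i j)
  case Nil then show ?case by simp
next
  case (Cons n ns)
  obtain c where "M = n * c" using Cons.prems by auto
  have "fourier n i' j' ^ M = 1" for i' j'
  proof -
    have "fourier n i' j' ^ M = (zeta n ^ n) ^ (i' * j' * c)"
      unfolding fourier_zeta \<open>M = n * c\<close> by (simp only: power_mult[symmetric] mult_ac)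
    then show ?thesis using zeta_pow_n[of n] Cons.prems by simp
  qed
  then show ?case using Cons by (simp add: kron_def power_mult_distrib)
qed

lemma count_ones: assumes "\<forall>n\<in>set ns. n > 0 \<and> n dvd M" "M > 0"
  shows "card {(e,k). e < prod_list ns \<and> k < prod_list ns \<and> fourier_tensor ns e k = 1} * M
       = prod_list ns * (\<Sum>t<M. prod_list (map (\<lambda>n. gcd n t) ns))"
proof -
  define P where "P = prod_list ns"
  define W where "W = fourier_tensor ns"
  have ind: "(\<Sum>t<M. W e k ^ t) = (if W e k = 1 then of_nat M else 0)" for e k
  proof -
    have "W e k ^ M = 1" unfolding W_def using tensor_pow_one assms(1) by blast
    then show ?thesis by (simp add: sum_gp_strict)
  qed
  have "of_nat (card {(e,k). e < P \<and> k < P \<and> W e k = 1} * M)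
      = (of_nat M :: complex) * (\<Sum>p\<in>{..<P} \<times> {..<P}. if W (fst p) (snd p) = 1 then 1 else 0)"
  proof -
    have "{(e,k). e < P \<and> k < P \<and> W e k = 1} = {p \<in> {..<P} \<times> {..<P}. W (fst p) (snd p) = 1}" by auto
    then show ?thesis by (simp add: sum.If_cases Int_def mult.commute)
  qed
  also have "\<dots> = (\<Sum>p\<in>{..<P} \<times> {..<P}. if W (fst p) (snd p) = 1 then of_nat M else 0)"
    by (simp add: sum_distrib_left if_distrib cong: if_cong)
  also have "\<dots> = (\<Sum>e<P. \<Sum>k<P. \<Sum>t<M. W e k ^ t)"
    by (simp add: ind sum.cartesian_product case_prod_beta)
  also have "\<dots> = (\<Sum>t<M. \<Sum>e<P. \<Sum>k<P. W e k ^ t)"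
    by (simp add: sum.swap[of _ "{..<M}"])
  also have "\<dots> = (\<Sum>t<M. of_nat (P * prod_list (map (\<lambda>n. gcd n t) ns)))"
    unfolding P_def W_def using Z_tensor assms(1) by simp
  also have "\<dots> = of_nat (P * (\<Sum>t<M. prod_list (map (\<lambda>n. gcd n t) ns)))"
    by (simp add: sum_distrib_left)
  finally show ?thesis unfolding P_def W_def using of_nat_eq_iff by blast
qed



definition Tf :: "nat \<Rightarrow> nat list \<Rightarrow> nat \<Rightarrow> nat" where
  "Tf a ks K = (\<Sum>t<a^K. prod_list (map (\<lambda>k. gcd (a^k) t) ks))"

definition npos :: "nat list \<Rightarrow> nat" where
  "npos ks = length (filter (\<lambda>k. 0 < k) ks)"

lemma prod_gcd_mult: fixes a t :: nat shows "prod_list (map (\<lambda>k. gcd (a^k) (a*t)) ks) = a ^ npos ks * prod_list (map (\<lambda>k. gcd (a^k) t) (map (\<lambda>k. k - 1) ks))"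
proof (induction ks)
  case Nil then show ?case by (simp add: npos_def)
next
  case (Cons k ks)
  show ?case
  proof (cases k)
    case 0
    have g1: "gcd (1::nat) n = 1" for n using gcd_1_nat[of n] by (simp add: gcd.commute)
    then show ?thesis using Cons 0 by (simp add: npos_def)
  next
    case (Suc k')
    have "gcd (a^k) (a*t) = a * gcd (a^k') t" using Suc by (simp add: gcd_mult_distrib_nat)
    then show ?thesis using Cons Suc by (simp add: npos_def mult_ac)
  qed
qed

lemma prod_gcd_coprime: fixes a t :: nat assumes "prime a" "\<not> a dvd t" shows "prod_list (map (\<lambda>k. gcd (a^k) t) ks) = 1"
proof -
  have "coprime a t" using assms by (rule prime_imp_coprime)
  then have "gcd (a^k) t = 1" for k by simp
  then show ?thesis by (induction ks) simp_all
qed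

lemma Tf_rec: assumes "prime a"
  shows "Tf a ks (Suc K) = (a^Suc K - a^K) + a ^ npos ks * Tf a (map (\<lambda>k. k - 1) ks) K"
proof -
  have a0: "a > 0" using assms prime_gt_0_nat by blast
  define f where "f t = prod_list (map (\<lambda>k. gcd (a^k) t) ks)" for t
  define A1 where "A1 = {t \<in> {..<a^Suc K}. \<not> a dvd t}"
  define A2 where "A2 = (\<lambda>t'. a * t') ` {..<a^K}"
  have inj: "inj_on (\<lambda>t'. a * t') {..<a^K}" using a0 by (simp add: inj_on_def)
  have A2sub: "A2 \<subseteq> {..<a^Suc K}" unfolding A2_def using a0 by auto
  have split: "{..<a^Suc K} = A1 \<union> A2"
  proof (intro set_eqI iffI)
    fix t assume t: "t \<in> {..<a^Suc K}"
    show "t \<in> A1 \<union> A2"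
    proof (cases "a dvd t")
      case True
      then obtain t' where "t = a * t'" by blast
      then have "t' < a^K" using t a0 by simp
      then show ?thesis using \<open>t = a * t'\<close> unfolding A2_def by blast
    qed (use t A1_def in auto)
  qed (use A2sub A1_def in auto)
  have disj: "A1 \<inter> A2 = {}" unfolding A1_def A2_def by auto
  have cA2: "card A2 = a^K" unfolding A2_def using inj by (simp add: card_image)
  have cA1: "card A1 = a^Suc K - a^K"
  proof -
    have "card {..<a^Suc K} = card (A1 \<union> A2)" using split by simp
    also have "\<dots> = card A1 + card A2"
      by (rule card_Un_disjoint) (use disj A1_def A2_def in auto)
    finally have "card {..<a^Suc K} = card A1 + card A2" .
    then show ?thesis using cA2 by simp
  qed
  have "Tf a ks (Suc K) = sum f A1 + sum f A2"
    unfolding Tf_def f_def[symmetric] split by (rule sum.union_disjoint) (use disj A1_def A2_def in auto)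
  moreover have "sum f A1 = a^Suc K - a^K"
  proof -
    have "sum f A1 = (\<Sum>t\<in>A1. 1)" unfolding f_def A1_def
      by (intro sum.cong refl) (use prod_gcd_coprime[OF assms] in auto)
    then show ?thesis using cA1 by simp
  qed
  moreover have "sum f A2 = a ^ npos ks * Tf a (map (\<lambda>k. k - 1) ks) K"
    unfolding A2_def Tf_def sum.reindex[OF inj] comp_def f_def prod_gcd_mult
    by (simp add: sum_distrib_left)
  ultimately show ?thesis by simp
qed

lemma prod_pow: "prod_list (map (\<lambda>k. a^k) ks) = a ^ sum_list ks"
  by (induction ks) (simp_all add: power_add)

lemma sum_minus1: "sum_list (map (\<lambda>k. k - 1) ks) + npos ks = sum_list ks"
  by (induction ks) (auto simp: npos_def)

lemma NT_a: assumes "prime a"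
  shows "(\<forall>k\<in>set ks. k \<le> Suc K) \<Longrightarrow> Suc K \<in> set ks \<Longrightarrow> a^K dvd Tf a ks (Suc K)"
proof (induction K arbitrary: ks)
  case 0 then show ?case by simp
next
  case (Suc K)
  define ks' where "ks' = map (\<lambda>k. k - 1) ks"
  have "\<forall>k\<in>set ks'. k \<le> Suc K" using Suc.prems unfolding ks'_def by auto
  moreover have "Suc K \<in> set ks'" using Suc.prems unfolding ks'_def by force
  ultimately have IH: "a^K dvd Tf a ks' (Suc K)" using Suc.IH by blast
  have "npos ks \<ge> 1"
  proof -
    have "Suc (Suc K) \<in> set (filter (\<lambda>k. 0 < k) ks)" using Suc.prems by simp
    then show ?thesis unfolding npos_def by (cases "filter (\<lambda>k. 0 < k) ks") auto
  qed
  then have d1: "a^Suc K dvd a ^ npos ks * Tf a ks' (Suc K)"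
    using IH by (metis Suc_le_eq le_imp_power_dvd mult_dvd_mono plus_1_eq_Suc power_add power_one_right
        dvd_mult_left dvd_power_le dvd_refl mult.commute)
  have "a^Suc (Suc K) - a^Suc K = a^Suc K * (a - 1)" by (simp add: algebra_simps)
  then have d2: "a^Suc K dvd a^Suc (Suc K) - a^Suc K" by simp
  have eq: "Tf a ks (Suc (Suc K)) = (a^Suc (Suc K) - a^Suc K) + a^npos ks * Tf a ks' (Suc K)"
    using Tf_rec[OF assms, of ks "Suc K"] unfolding ks'_def by simp
  show ?case by (simp only: eq) (rule dvd_add[OF d2 d1])
qed

lemma pow_cong1: "\<exists>x. (int a)^m = 1 + (int a - 1) * x"
proof (induction m)
  case 0 then show ?case by (intro exI[of _ 0]) simp
next
  case (Suc m)
  then obtain x where "(int a)^m = 1 + (int a - 1) * x" by blast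
  then have "(int a)^Suc m = int a * (1 + (int a - 1) * x)" by simp
  also have "\<dots> = 1 + (int a - 1) * (1 + x + (int a - 1) * x)" by (simp add: algebra_simps)
  finally have "(int a)^Suc m = 1 + (int a - 1) * (1 + x + (int a - 1) * x)" .
  then show ?case by blast
qed

lemma pow_cong2: "\<exists>y. (int a)^m = 1 + int m * (int a - 1) + (int a - 1)^2 * y"
proof (induction m)
  case 0 then show ?case by (intro exI[of _ 0]) simp
next
  case (Suc m)
  then obtain y where "(int a)^m = 1 + int m * (int a - 1) + (int a - 1)^2 * y" by blast
  then have "(int a)^Suc m = int a * (1 + int m * (int a - 1) + (int a - 1)^2 * y)" by simp
  also have "\<dots> = 1 + int (Suc m) * (int a - 1) + (int a - 1)^2 * (int m + y + (int a - 1) * y)"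
    by (simp add: algebra_simps power2_eq_square)
  finally have "(int a)^Suc m = 1 + int (Suc m) * (int a - 1) + (int a - 1)^2 * (int m + y + (int a - 1) * y)" .
  then show ?case by blast
qed

lemma NT_b: assumes "prime a"
  shows "(\<forall>k\<in>set ks. k \<le> K) \<Longrightarrow> \<exists>q. int (Tf a ks K) = 1 + int (K + sum_list ks) * (int a - 1) + (int a - 1)^2 * q"
proof (induction K arbitrary: ks)
  case 0
  have s0: "sum_list ks = 0" using 0 by (induction ks) auto
  have "Tf a ks 0 = a ^ sum_list ks" unfolding Tf_def by (simp add: prod_pow)
  then have "Tf a ks 0 = 1" using s0 by simp
  then show ?case using s0 by (intro exI[of _ 0]) simp
next
  case (Suc K)
  define ks' where "ks' = map (\<lambda>k. k - 1) ks"
  define b where "b = int a - 1"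
  define p where "p = npos ks"
  have "\<forall>k\<in>set ks'. k \<le> K" using Suc.prems unfolding ks'_def by auto
  then obtain z where z: "int (Tf a ks' K) = 1 + int (K + sum_list ks') * b + b^2 * z"
    using Suc.IH b_def by blast
  obtain x where x: "(int a)^K = 1 + b * x" using pow_cong1 b_def by blast
  obtain y where y: "(int a)^p = 1 + int p * b + b^2 * y" using pow_cong2 b_def by blast
  have sl: "int (sum_list ks') = int (sum_list ks) - int p"
    using sum_minus1[of ks] unfolding ks'_def p_def by linarith
  have a0: "a > 0" using assms prime_gt_0_nat by blast
  have "int (Tf a ks (Suc K)) = int (a^Suc K - a^K) + (int a)^p * int (Tf a ks' K)"
    unfolding Tf_rec[OF assms] ks'_def p_def by simp
  also have "int (a^Suc K - a^K) = (int a)^K * b"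
  proof -
    have "a^K \<le> a^Suc K" using a0 by simp
    then have "int (a^Suc K - a^K) = int a ^ Suc K - int a ^ K" by (simp add: of_nat_diff)
    then show ?thesis unfolding b_def by (simp add: algebra_simps)
  qed
  finally have "int (Tf a ks (Suc K)) = (int a)^K * b + (int a)^p * int (Tf a ks' K)" .
  also have "\<dots> = (1 + b * x) * b + (1 + int p * b + b^2 * y) * (1 + (int K + int (sum_list ks) - int p) * b + b^2 * z)"
    using x y z sl by simp
  also have "\<dots> = 1 + int (Suc K + sum_list ks) * b + b^2 * (x + z + int p * (int K + int (sum_list ks) - int p) + int p * b * z + y + (int K + int (sum_list ks) - int p) * b * y + b^2 * y * z)"
    by (simp add: algebra_simps power2_eq_square)
  finally show ?case unfolding b_def by blast
qed



theorem corollary5p5: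
  fixes a :: nat and ks :: "nat list"
  assumes "prime a"
    and "ks \<noteq> []"
    and "Max (set ks) > 0"
  defines "N \<equiv> a ^ sum_list ks"
  defines "F \<equiv> fourier_tensor (map (\<lambda>k. a ^ k) ks)"
  shows "a ^ (sum_list ks - 1) dvd undephased_defect N F \<and>
         (int a - 1)^2 dvd (int (undephased_defect N F) - (2 * int N - 1))"
proof -
  define ns where "ns = map (\<lambda>k. a ^ k) ks"
  define K where "K = Max (set ks)"
  define n where "n = sum_list ks"
  have a0: "a > 0" using assms(1) prime_gt_0_nat by blast
  have a1: "a > 1" using assms(1) prime_gt_1_nat by blast
  have pos: "\<forall>m\<in>set ns. m > 0" unfolding ns_def using a0 by auto
  have PN: "prod_list ns = N" unfolding ns_def N_def by (rule prod_pow)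
  have good: "good N F"
  proof -
    have "good (prod_list ns) (fourier_tensor ns)" by (rule good_tensor[OF pos])
    then show ?thesis by (simp only: PN F_def ns_def[symmetric])
  qed
  interpret gw N F by (rule gw.intro[OF good])
  define D where "D = undephased_defect N F"
  have D: "D = card {(e,k). e < N \<and> k < N \<and> F e k = 1}"
    unfolding D_def defect_eq Iset_def ..
  have Kin: "K \<in> set ks" unfolding K_def using assms(2) by simp
  have Kle: "\<forall>k\<in>set ks. k \<le> K" unfolding K_def by simp
  have K0: "K > 0" using assms(3) K_def by simp
  have Kn: "K \<le> n" unfolding n_def using Kin member_le_sum_list by blast
  have dvdM: "\<forall>m\<in>set ns. m > 0 \<and> m dvd a^K"
    unfolding ns_def using Kle a0 by (auto intro: le_imp_power_dvd)
  have "card {(e,k). e < prod_list ns \<and> k < prod_list ns \<and> fourier_tensor ns e k = 1} * a^K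
       = prod_list ns * (\<Sum>t<a^K. prod_list (map (\<lambda>m. gcd m t) ns))"
    by (rule count_ones[OF dvdM]) (use a0 in simp)
  moreover have "(\<Sum>t<a^K. prod_list (map (\<lambda>m. gcd m t) ns)) = Tf a ks K"
    unfolding Tf_def ns_def by (simp add: comp_def)
  ultimately have E: "D * a^K = a^n * Tf a ks K"
    unfolding D PN F_def ns_def[symmetric] N_def n_def by simp
  obtain K' where K': "K = Suc K'" using K0 by (cases K) auto
  have part1: "a ^ (n - 1) dvd D"
  proof -
    have "a^K' dvd Tf a ks K" using NT_a[OF assms(1), of ks K'] Kle Kin K' by simp
    then obtain q where q: "Tf a ks K = a^K' * q" by blast
    have ex: "n + K' = (n - 1) + K" using Kn K' by simp
    have "a^n * a^K' = a^(n - 1) * a^K" by (simp only: power_add[symmetric] ex)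
    then have "D * a^K = (a^(n-1) * q) * a^K" using E q by (simp add: mult_ac)
    then have "D = a^(n-1) * q" using a0 by simp
    then show ?thesis by simp
  qed
  have part2: "(int a - 1)^2 dvd (int D - (2 * int N - 1))"
  proof -
    define b where "b = int a - 1"
    obtain q where q: "int (Tf a ks K) = 1 + int (K + n) * b + b^2 * q"
      using NT_b[OF assms(1) Kle] unfolding b_def n_def by blast
    obtain y1 where y1: "(int a)^n = 1 + int n * b + b^2 * y1" using pow_cong2 b_def by blast
    obtain y2 where y2: "(int a)^K = 1 + int K * b + b^2 * y2" using pow_cong2 b_def by blast
    have EI: "(int a)^K * int D = (int a)^n * int (Tf a ks K)"
      using E by (metis of_nat_mult of_nat_power mult.commute)
    have "(int a)^K * (int D - 1 - 2 * int n * b) = (int a)^n * int (Tf a ks K) - (int a)^K * (1 + 2 * int n * b)"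
      using EI by (simp add: algebra_simps)
    also have "\<dots> = (1 + int n * b + b^2 * y1) * (1 + int (K + n) * b + b^2 * q) - (1 + int K * b + b^2 * y2) * (1 + 2 * int n * b)"
      using q y1 y2 by simp
    also have "\<dots> = b^2 * (int n * int (K + n) + q + y1 + int n * b * q + int (K + n) * b * y1 + b^2 * y1 * q - 2 * int n * int K - y2 - 2 * int n * b * y2)"
      by (simp add: algebra_simps power2_eq_square)
    finally have "b^2 dvd (int a)^K * (int D - 1 - 2 * int n * b)" by (metis dvd_triv_left)
    moreover have "coprime (b^2) ((int a)^K)" unfolding b_def
      using coprime_diff_one_left[of "int a"] by simp
    ultimately have d1: "b^2 dvd (int D - 1 - 2 * int n * b)"
      using coprime_dvd_mult_right_iff by blast
    have "int N = 1 + int n * b + b^2 * y1" using y1 unfolding N_def n_def by simp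
    then have eq: "int D - (2 * int N - 1) = (int D - 1 - 2 * int n * b) - b^2 * (2 * y1)"
      by (simp add: algebra_simps)
    have "b^2 dvd int D - (2 * int N - 1)"
      unfolding eq by (rule dvd_diff[OF d1]) simp
    then show ?thesis unfolding b_def .
  qed
  show ?thesis using part1 part2 unfolding D_def n_def by simp
qed


end
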